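(* Let $G$ be a generator matrix on the discrete space $\mathcal X$, let $\theta>0$ and let $M\ge1$ be an integer such that $Q:=I+G/\theta$ and $I+G/M$ are entrywise non-negative. Let $K_n=I+\frac Gn\mathbb 1(n>M)$ for $n\ge1$. Let $\pi$ be a probability vector and $\mu$ a stationary distribution of $Q$ such that $\pi^tQ^n\to\mu^t$ entrywise. Then, with $(\mu^n)^t:=\pi^t\prod_{i=1}^nK_i$, as $n\to\infty$ both (a) $(\mu^n)^t\to\mu^t$ and (b) $(\mu^n)^tQ\to\mu^t$ hold entrywise.
   Context: A generator matrix on $\mathcal X$: $G_{i,j}\ge0$ for $i\ne j$, $G_{i,i}=-\sum_{j\ne i}G_{i,j}$, and $\sup_i|G_{i,i}|<\infty$. *)

theory Defs
  imports "HOL-Analysis.Analysis"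
begin

definition mat_id :: "'a \<Rightarrow> 'a \<Rightarrow> real" where
  "mat_id i j = (if i = j then 1 else 0)"

definition vecmat :: "('a \<Rightarrow> real) \<Rightarrow> ('a \<Rightarrow> 'a \<Rightarrow> real) \<Rightarrow> 'a \<Rightarrow> real" where
  "vecmat v A = (\<lambda>j. \<Sum>\<^sub>\<infinity>i. v i * A i j)"

definition generator_matrix :: "('a \<Rightarrow> 'a \<Rightarrow> real) \<Rightarrow> bool" where
  "generator_matrix G \<longleftrightarrow>
     (\<forall>i j. i \<noteq> j \<longrightarrow> 0 \<le> G i j) \<and>
     (\<forall>i. (\<lambda>j. G i j) summable_on (UNIV - {i}) \<and>
          G i i = - (\<Sum>\<^sub>\<infinity>j\<in>UNIV - {i}. G i j)) \<and>
     (\<exists>C. \<forall>i. \<bar>G i i\<bar> \<le> C)"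

definition prob_vector :: "('a \<Rightarrow> real) \<Rightarrow> bool" where
  "prob_vector p \<longleftrightarrow> (\<forall>i. 0 \<le> p i) \<and> p summable_on UNIV \<and> (\<Sum>\<^sub>\<infinity>i. p i) = 1"

definition entrywise_nonneg :: "('a \<Rightarrow> 'a \<Rightarrow> real) \<Rightarrow> bool" where
  "entrywise_nonneg A \<longleftrightarrow> (\<forall>i j. 0 \<le> A i j)"

definition Kmat :: "('a \<Rightarrow> 'a \<Rightarrow> real) \<Rightarrow> nat \<Rightarrow> nat \<Rightarrow> 'a \<Rightarrow> 'a \<Rightarrow> real" where
  "Kmat G M n = (\<lambda>i j. mat_id i j + (if n > M then G i j / real n else 0))"

primrec mu_seq :: "('a \<Rightarrow> 'a \<Rightarrow> real) \<Rightarrow> nat \<Rightarrow> ('a \<Rightarrow> real) \<Rightarrow> nat \<Rightarrow> 'a \<Rightarrow> real" where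
  "mu_seq G M p 0 = p"
| "mu_seq G M p (Suc n) = vecmat (mu_seq G M p n) (Kmat G M (Suc n))"

end

theory Submission
  imports Defs
begin


definition stoch :: "('a \<Rightarrow> 'a \<Rightarrow> real) \<Rightarrow> bool" where
  "stoch A \<longleftrightarrow> (\<forall>i j. 0 \<le> A i j) \<and> (\<forall>i. A i summable_on UNIV \<and> infsum (A i) UNIV = 1)"

lemma prob_le1: assumes "prob_vector v" shows "v j \<le> 1"
proof -
  have "sum v {j} \<le> infsum v UNIV"
    using assms unfolding prob_vector_def by (intro finite_sum_le_infsum) auto
  then show ?thesis using assms unfolding prob_vector_def by simp
qed

lemma stoch_le1: assumes "stoch A" shows "A i j \<le> 1"
proof -
  have "sum (A i) {j} \<le> infsum (A i) UNIV"
    using assms unfolding stoch_def by (intro finite_sum_le_infsum) auto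
  then show ?thesis using assms unfolding stoch_def by simp
qed

lemma vm_summ:
  assumes "prob_vector v" "\<And>i. \<bar>A i j\<bar> \<le> B"
  shows "(\<lambda>i. v i * A i j) summable_on UNIV"
proof -
  have "(\<lambda>i. norm (v i)) summable_on UNIV" using assms(1) unfolding prob_vector_def
    using summable_on_iff_abs_summable_on_real by blast
  then have "(\<lambda>i. norm (B * v i)) summable_on UNIV"
    using summable_on_iff_abs_summable_on_real summable_on_cmult_right
    by (metis (no_types) \<open>(\<lambda>i. norm (v i)) summable_on UNIV\<close>)
  then have "(\<lambda>i. norm (v i * A i j)) summable_on UNIV"
  proof (rule Infinite_Sum.abs_summable_on_comparison_test)
    fix i
    have "\<bar>v i * A i j\<bar> = v i * \<bar>A i j\<bar>" using assms(1) unfolding prob_vector_def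
      by (simp add: abs_mult)
    also have "\<dots> \<le> v i * B" using assms(1,2) unfolding prob_vector_def
      by (simp add: mult_left_mono)
    also have "\<dots> \<le> \<bar>B * v i\<bar>" by (simp add: mult.commute)
    finally show "norm (v i * A i j) \<le> norm (B * v i)" by simp
  qed
  then show ?thesis using summable_on_iff_abs_summable_on_real by blast
qed

lemma vm_id: "vecmat v mat_id j = v j"
proof -
  have "(\<Sum>\<^sub>\<infinity>i. v i * mat_id i j) = (\<Sum>\<^sub>\<infinity>i\<in>{j}. v i * mat_id i j)"
    by (rule infsum_cong_neutral) (auto simp: mat_id_def)
  then show ?thesis by (simp add: vecmat_def mat_id_def)
qed

lemma vm_comb:
  assumes "(\<lambda>i. v i * A i j) summable_on UNIV" "(\<lambda>i. v i * B i j) summable_on UNIV"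
  shows "vecmat v (\<lambda>i j. a * A i j + b * B i j) j = a * vecmat v A j + b * vecmat v B j"
proof -
  have "(\<Sum>\<^sub>\<infinity>i. v i * (a * A i j + b * B i j)) = (\<Sum>\<^sub>\<infinity>i. a * (v i * A i j) + b * (v i * B i j))"
    by (simp add: algebra_simps)
  also have "\<dots> = (\<Sum>\<^sub>\<infinity>i. a * (v i * A i j)) + (\<Sum>\<^sub>\<infinity>i. b * (v i * B i j))"
    by (rule infsum_add) (use assms in \<open>auto intro: summable_on_cmult_right\<close>)
  also have "\<dots> = a * vecmat v A j + b * vecmat v B j"
    by (simp add: vecmat_def infsum_cmult_right')
  finally show ?thesis by (simp add: vecmat_def)
qed

lemma infsum_finsum:
  fixes f :: "'k \<Rightarrow> 'a \<Rightarrow> real"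
  assumes "finite S" "\<And>k. k \<in> S \<Longrightarrow> f k summable_on UNIV"
  shows "(\<Sum>\<^sub>\<infinity>i. \<Sum>k\<in>S. f k i) = (\<Sum>k\<in>S. \<Sum>\<^sub>\<infinity>i. f k i)
         \<and> (\<lambda>i. \<Sum>k\<in>S. f k i) summable_on UNIV"
  using assms
proof (induction S rule: finite_induct)
  case empty then show ?case by simp
next
  case (insert x F)
  then have s1: "f x summable_on UNIV" and s2: "(\<lambda>i. \<Sum>k\<in>F. f k i) summable_on UNIV"
    and e: "(\<Sum>\<^sub>\<infinity>i. \<Sum>k\<in>F. f k i) = (\<Sum>k\<in>F. \<Sum>\<^sub>\<infinity>i. f k i)" by auto
  have "(\<Sum>\<^sub>\<infinity>i. \<Sum>k\<in>insert x F. f k i) = (\<Sum>\<^sub>\<infinity>i. f x i + (\<Sum>k\<in>F. f k i))"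
    using insert by simp
  also have "\<dots> = (\<Sum>\<^sub>\<infinity>i. f x i) + (\<Sum>\<^sub>\<infinity>i. \<Sum>k\<in>F. f k i)"
    by (rule infsum_add[OF s1 s2])
  finally show ?case using insert e summable_on_add[OF s1 s2] by simp
qed

lemma vm_lin:
  assumes "finite S" "\<And>k. k \<in> S \<Longrightarrow> prob_vector (P k)" "\<And>i. \<bar>A i j\<bar> \<le> B"
  shows "vecmat (\<lambda>i. \<Sum>k\<in>S. c k * P k i) A j = (\<Sum>k\<in>S. c k * vecmat (P k) A j)"
proof -
  have "vecmat (\<lambda>i. \<Sum>k\<in>S. c k * P k i) A j = (\<Sum>\<^sub>\<infinity>i. \<Sum>k\<in>S. c k * (P k i * A i j))"
    by (simp add: vecmat_def sum_distrib_right mult.assoc)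
  also have "\<dots> = (\<Sum>k\<in>S. \<Sum>\<^sub>\<infinity>i. c k * (P k i * A i j))"
  proof -
    have "\<And>k. k \<in> S \<Longrightarrow> (\<lambda>i. c k * (P k i * A i j)) summable_on UNIV"
      using assms vm_summ[of _ A j B] by (auto intro: summable_on_cmult_right)
    then show ?thesis using infsum_finsum[of S "\<lambda>k i. c k * (P k i * A i j)"] assms by auto
  qed
  also have "\<dots> = (\<Sum>k\<in>S. c k * vecmat (P k) A j)"
    by (simp add: vecmat_def infsum_cmult_right')
  finally show ?thesis .
qed

lemma stoch_prob:
  assumes A: "stoch A" and v: "prob_vector v"
  shows "prob_vector (vecmat v A)"
proof -
  let ?f = "\<lambda>(i,j). v i * A i j"
  have vn: "\<And>i. 0 \<le> v i" using v by (simp add: prob_vector_def)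
  have An: "\<And>i j. 0 \<le> A i j" using A by (simp add: stoch_def)
  have fn: "\<And>x. 0 \<le> ?f x" using vn An by (auto simp: case_prod_beta)
  have rowsum: "\<And>i. (\<Sum>\<^sub>\<infinity>j. v i * A i j) = v i"
    using A by (simp add: stoch_def infsum_cmult_right')
  have rows: "\<And>i. (\<lambda>j. v i * A i j) summable_on UNIV"
    using A by (simp add: stoch_def summable_on_cmult_right)
  have "(\<lambda>x. norm (?f x)) summable_on Sigma UNIV (\<lambda>_. UNIV)"
  proof (subst Infinite_Sum.abs_summable_on_Sigma_iff, intro conjI ballI)
    fix i :: 'a
    show "(\<lambda>y. norm (?f (i, y))) summable_on UNIV"
      using rows[of i] summable_on_iff_abs_summable_on_real[of "\<lambda>j. v i * A i j"] by auto
  next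
    have ab: "\<And>i y. \<bar>v i * A i y\<bar> = v i * A i y" by (simp add: vn An)
    have "(\<lambda>i. norm (\<Sum>\<^sub>\<infinity>y. norm (?f (i, y)))) = v"
      by (auto simp: ab rowsum abs_of_nonneg vn)
    then show "(\<lambda>i. norm (\<Sum>\<^sub>\<infinity>y\<in>UNIV. norm (?f (i, y)))) summable_on UNIV"
      using v summable_on_iff_abs_summable_on_real[of v] unfolding prob_vector_def by auto
  qed
  then have S: "?f summable_on UNIV \<times> UNIV"
    using summable_on_iff_abs_summable_on_real by auto
  have "(\<lambda>(i, j). v i * A i j) summable_on UNIV \<times> UNIV" using S by simp
  then have sw: "infsum (\<lambda>i. infsum (\<lambda>j. v i * A i j) UNIV) UNIV = infsum (\<lambda>j. infsum (\<lambda>i. v i * A i j) UNIV) UNIV"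
    by (rule infsum_swap_banach)
  have S2: "(\<lambda>(j, i). v i * A i j) summable_on UNIV \<times> UNIV"
  proof -
    have "(\<lambda>(j, i). v i * A i j) = ?f \<circ> prod.swap" by auto
    moreover have "?f summable_on prod.swap ` (UNIV \<times> UNIV)" using S by simp
    ultimately show ?thesis using summable_on_reindex[of prod.swap "UNIV \<times> UNIV" ?f] by simp
  qed
  have "(\<lambda>j. \<Sum>\<^sub>\<infinity>i. v i * A i j) summable_on UNIV"
    using summable_on_Sigma_banach[of "\<lambda>j i. v i * A i j" UNIV "\<lambda>_. UNIV"] S2 by simp
  moreover have "(\<Sum>\<^sub>\<infinity>j. \<Sum>\<^sub>\<infinity>i. v i * A i j) = 1"
    using sw rowsum v by (simp add: prob_vector_def)
  moreover have "\<And>j. 0 \<le> (\<Sum>\<^sub>\<infinity>i. v i * A i j)" by (rule infsum_nonneg) (simp add: vn An)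
  ultimately show ?thesis by (simp add: prob_vector_def vecmat_def)
qed




lemma harm_not_summable:
  assumes "\<theta> > 0" shows "\<not> summable (\<lambda>i. \<theta> / real (Suc (N + i)))"
proof
  assume "summable (\<lambda>i. \<theta> / real (Suc (N + i)))"
  then have "summable (\<lambda>i. inverse \<theta> * (\<theta> / real (Suc (N + i))))" by (rule summable_mult)
  then have "summable (\<lambda>i. inverse (real (i + Suc N)))" using assms
    by (simp add: field_simps add.commute)
  then have "summable (\<lambda>i. inverse (real i))" by (rule summable_iff_shift[THEN iffD1])
  then show False using not_summable_harmonic by blast
qed



lemma recur_zero:
  fixes x y :: "nat \<Rightarrow> real"
  assumes th: "\<theta> > 0"
    and xn: "\<And>n. 0 \<le> x n"
    and sle: "\<And>n. n \<ge> N \<Longrightarrow> \<theta> / real (Suc n) \<le> 1"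
    and rec: "\<And>n. n \<ge> N \<Longrightarrow> x (Suc n) \<le> (1 - \<theta> / real (Suc n)) * x n + \<theta> / real (Suc n) * y n"
    and y: "y \<longlonglongrightarrow> 0"
  shows "x \<longlonglongrightarrow> 0"
proof (rule LIMSEQ_I)
  fix r :: real assume r: "r > 0"
  define e where "e = r / 2"
  have e: "e > 0" using r by (simp add: e_def)
  define s where "s n = \<theta> / real (Suc n)" for n
  have s0: "0 \<le> s n" for n using th by (simp add: s_def)
  obtain N2 where N2: "\<And>n. n \<ge> N2 \<Longrightarrow> norm (y n - 0) < e" using LIMSEQ_D[OF y e] by blast
  define N1 where "N1 = max N N2"
  define z where "z n = max (x n - e) 0" for n
  have z0: "0 \<le> z n" for n by (simp add: z_def)
  have zs: "z (Suc n) \<le> (1 - s n) * z n" if "n \<ge> N1" for n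
  proof -
    have "n \<ge> N" "n \<ge> N2" using that by (auto simp: N1_def)
    have yn: "y n \<le> e" using N2[OF \<open>n \<ge> N2\<close>] by simp
    have s1: "s n \<le> 1" using sle[OF \<open>n \<ge> N\<close>] by (simp add: s_def)
    have "x (Suc n) - e \<le> (1 - s n) * x n + s n * y n - e" using rec[OF \<open>n \<ge> N\<close>] by (simp add: s_def)
    also have "\<dots> \<le> (1 - s n) * x n + s n * e - e" using yn s0[of n] by (simp add: mult_left_mono)
    also have "\<dots> = (1 - s n) * (x n - e)" by (simp add: algebra_simps)
    also have "\<dots> \<le> (1 - s n) * z n" using s1 by (intro mult_left_mono) (auto simp: z_def)
    finally have "x (Suc n) - e \<le> (1 - s n) * z n" .
    moreover have "0 \<le> (1 - s n) * z n" using s1 z0[of n] by simp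
    ultimately show ?thesis by (simp add: z_def)
  qed
  have zdec: "z (Suc n) \<le> z n" if "n \<ge> N1" for n
  proof -
    have "0 \<le> s n * z n" using s0[of n] z0[of n] by simp
    then show ?thesis using zs[OF that] by (simp add: algebra_simps)
  qed
  have zmono: "z (n + m) \<le> z n" if "n \<ge> N1" for n m
  proof (induction m)
    case 0 then show ?case by simp
  next
    case (Suc m) then show ?case using zdec[of "n + m"] that by simp
  qed
  have "\<exists>n0\<ge>N1. z n0 < e"
  proof (rule ccontr)
    assume "\<not> ?thesis"
    then have big: "\<And>n. n \<ge> N1 \<Longrightarrow> e \<le> z n" using not_le by blast
    have step: "z (Suc n) \<le> z n - e * s n" if "n \<ge> N1" for n
    proof -
      have "z (Suc n) \<le> z n - s n * z n" using zs[OF that] by (simp add: algebra_simps)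
      also have "\<dots> \<le> z n - s n * e" using big[OF that] s0[of n] by (simp add: mult_left_mono)
      finally show ?thesis by (simp add: mult.commute)
    qed
    have part: "z (N1 + m) \<le> z N1 - e * (\<Sum>i<m. s (N1 + i))" for m
    proof (induction m)
      case 0 then show ?case by simp
    next
      case (Suc m)
      have "z (N1 + Suc m) \<le> z (N1 + m) - e * s (N1 + m)" using step[of "N1 + m"] by simp
      then show ?case using Suc by (simp add: algebra_simps)
    qed
    have "(\<Sum>i<m. s (N1 + i)) \<le> z N1 / e" for m
    proof -
      have "e * (\<Sum>i<m. s (N1 + i)) \<le> z N1" using part[of m] z0[of "N1 + m"] by simp
      then show ?thesis using e by (simp add: field_simps mult.commute)
    qed
    then have "summable (\<lambda>i. s (N1 + i))"
      by (intro summableI_nonneg_bounded[where x="z N1 / e"]) (auto simp: s0)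
    then show False using harm_not_summable[OF th, of N1] by (simp add: s_def)
  qed
  then obtain n0 where n0: "n0 \<ge> N1" "z n0 < e" by blast
  show "\<exists>no. \<forall>n\<ge>no. norm (x n - 0) < r"
  proof (intro exI allI impI)
    fix n assume "n \<ge> n0"
    then have "z n \<le> z n0" using zmono[OF n0(1), of "n - n0"] by simp
    moreover have "x n - e \<le> z n" unfolding z_def by simp
    ultimately have "x n - e < e" using n0(2) by linarith
    then show "norm (x n - 0) < r" using xn[of n] by (simp add: e_def)
  qed
qed



lemma weighted_lim:
  fixes w :: "nat \<Rightarrow> nat \<Rightarrow> real" and a :: "nat \<Rightarrow> real"
  assumes s1: "\<And>n. (\<Sum>k\<le>n. w n k) = 1"
    and sb: "\<And>n. (\<Sum>k\<le>n. \<bar>w n k\<bar>) \<le> B"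
    and wk: "\<And>k. (\<lambda>n. w n k) \<longlonglongrightarrow> 0"
    and a: "a \<longlonglongrightarrow> L"
    and ab: "\<And>k. \<bar>a k - L\<bar> \<le> 1"
  shows "(\<lambda>n. \<Sum>k\<le>n. w n k * a k) \<longlonglongrightarrow> L"
proof (rule LIMSEQ_I)
  fix r :: real assume r: "r > 0"
  have "0 \<le> (\<Sum>k\<le>0. \<bar>w 0 k\<bar>)" by (rule sum_nonneg) simp
  then have B0: "0 \<le> B" using sb[of 0] by linarith
  define e where "e = r / (2 * (B + 1))"
  have e: "e > 0" using r B0 by (simp add: e_def)
  obtain K where K: "\<And>k. k \<ge> K \<Longrightarrow> norm (a k - L) < e" using LIMSEQ_D[OF a e] by blast
  have "(\<lambda>n. \<Sum>k<K. \<bar>w n k\<bar>) \<longlonglongrightarrow> (\<Sum>k<K. \<bar>0\<bar>)"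
    by (intro tendsto_sum tendsto_rabs wk)
  then have "(\<lambda>n. \<Sum>k<K. \<bar>w n k\<bar>) \<longlonglongrightarrow> 0" by simp
  from LIMSEQ_D[OF this, of "r/2"] r obtain N where
    N: "\<And>n. n \<ge> N \<Longrightarrow> norm ((\<Sum>k<K. \<bar>w n k\<bar>) - 0) < r/2" by auto
  show "\<exists>no. \<forall>n\<ge>no. norm ((\<Sum>k\<le>n. w n k * a k) - L) < r"
  proof (intro exI allI impI)
    fix n assume "n \<ge> N"
    have "(\<Sum>k\<le>n. w n k * a k) - L = (\<Sum>k\<le>n. w n k * (a k - L))"
    proof -
      have "(\<Sum>k\<le>n. w n k * (a k - L)) = (\<Sum>k\<le>n. w n k * a k) - L * (\<Sum>k\<le>n. w n k)"
        by (simp add: algebra_simps sum_subtractf sum_distrib_left)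
      then show ?thesis using s1[of n] by simp
    qed
    also have "\<bar>\<dots>\<bar> \<le> (\<Sum>k\<le>n. \<bar>w n k * (a k - L)\<bar>)" by (rule sum_abs)
    also have "\<dots> \<le> (\<Sum>k\<le>n. (if k < K then \<bar>w n k\<bar> else 0) + e * \<bar>w n k\<bar>)"
    proof (rule sum_mono)
      fix k assume "k \<in> {..n}"
      show "\<bar>w n k * (a k - L)\<bar> \<le> (if k < K then \<bar>w n k\<bar> else 0) + e * \<bar>w n k\<bar>"
      proof (cases "k < K")
        case True
        have "\<bar>w n k\<bar> * \<bar>a k - L\<bar> \<le> \<bar>w n k\<bar>" using ab[of k] by (simp add: mult_left_le)
        moreover have "0 \<le> e * \<bar>w n k\<bar>" using e by simp
        ultimately show ?thesis using True by (simp add: abs_mult)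
      next
        case False
        then have "\<bar>a k - L\<bar> \<le> e" using K[of k] by simp
        then have "\<bar>w n k\<bar> * \<bar>a k - L\<bar> \<le> \<bar>w n k\<bar> * e" by (simp add: mult_left_mono)
        then show ?thesis using False by (simp add: abs_mult mult.commute)
      qed
    qed
    also have "\<dots> = (\<Sum>k\<le>n. if k < K then \<bar>w n k\<bar> else 0) + e * (\<Sum>k\<le>n. \<bar>w n k\<bar>)"
      by (simp add: sum.distrib sum_distrib_left)
    also have "(\<Sum>k\<le>n. if k < K then \<bar>w n k\<bar> else 0) \<le> (\<Sum>k<K. \<bar>w n k\<bar>)"
    proof -
      have "(\<Sum>k\<le>n. if k < K then \<bar>w n k\<bar> else 0) = (\<Sum>k\<in>{..n} \<inter> {..<K}. \<bar>w n k\<bar>)"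
        by (simp add: sum.inter_restrict lessThan_def)
      also have "\<dots> \<le> (\<Sum>k<K. \<bar>w n k\<bar>)" by (rule sum_mono2) auto
      finally show ?thesis .
    qed
    also have "e * (\<Sum>k\<le>n. \<bar>w n k\<bar>) \<le> e * B" using sb[of n] e by simp
    finally have "\<bar>(\<Sum>k\<le>n. w n k * a k) - L\<bar> \<le> (\<Sum>k<K. \<bar>w n k\<bar>) + e * B" by simp
    moreover have "(\<Sum>k<K. \<bar>w n k\<bar>) < r/2" using N[OF \<open>n \<ge> N\<close>] by simp
    moreover have "e * B < r / 2" using r B0 by (simp add: e_def field_simps)
    ultimately show "norm ((\<Sum>k\<le>n. w n k * a k) - L) < r" by simp
  qed
qed




primrec wt :: "(nat \<Rightarrow> real) \<Rightarrow> nat \<Rightarrow> nat \<Rightarrow> real" where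
  "wt t 0 k = (if k = 0 then 1 else 0)"
| "wt t (Suc n) k = (1 - t (Suc n)) * wt t n k + t (Suc n) * (if k = 0 then 0 else wt t n (k - 1))"

lemma wt_zero: "n < k \<Longrightarrow> wt t n k = 0"
  by (induction n arbitrary: k) auto

lemma shift_sum: "(\<Sum>k\<le>Suc n. (if k = 0 then 0 else f (k - 1))) = (\<Sum>k\<le>n. f k :: real)"
  by (subst sum.atMost_Suc_shift) simp

lemma wt_sum: "(\<Sum>k\<le>n. wt t n k) = 1"
proof (induction n)
  case 0 then show ?case by simp
next
  case (Suc n)
  have "(\<Sum>k\<le>Suc n. wt t (Suc n) k) =
     (1 - t (Suc n)) * (\<Sum>k\<le>Suc n. wt t n k) + t (Suc n) * (\<Sum>k\<le>Suc n. (if k = 0 then 0 else wt t n (k - 1)))"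
    by (simp only: wt.simps sum.distrib sum_distrib_left)
  also have "(\<Sum>k\<le>Suc n. wt t n k) = 1" using Suc wt_zero[of n "Suc n" t] by simp
  also have "(\<Sum>k\<le>Suc n. (if k = 0 then 0 else wt t n (k - 1))) = 1" using Suc shift_sum by simp
  finally show ?case by simp
qed

lemma wt_abs_step:
  assumes "0 \<le> t (Suc n)" "t (Suc n) \<le> 1"
  shows "(\<Sum>k\<le>Suc n. \<bar>wt t (Suc n) k\<bar>) \<le> (\<Sum>k\<le>n. \<bar>wt t n k\<bar>)"
proof -
  have "(\<Sum>k\<le>Suc n. \<bar>wt t (Suc n) k\<bar>) \<le>
     (\<Sum>k\<le>Suc n. (1 - t (Suc n)) * \<bar>wt t n k\<bar> + t (Suc n) * (if k = 0 then 0 else \<bar>wt t n (k - 1)\<bar>))"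
  proof (rule sum_mono)
    fix k
    have "\<bar>wt t (Suc n) k\<bar> \<le> \<bar>(1 - t (Suc n)) * wt t n k\<bar> + \<bar>t (Suc n) * (if k = 0 then 0 else wt t n (k - 1))\<bar>"
      by (simp only: wt.simps abs_triangle_ineq)
    also have "\<dots> = (1 - t (Suc n)) * \<bar>wt t n k\<bar> + t (Suc n) * (if k = 0 then 0 else \<bar>wt t n (k - 1)\<bar>)"
      using assms by (simp add: abs_mult)
    finally show "\<bar>wt t (Suc n) k\<bar> \<le> (1 - t (Suc n)) * \<bar>wt t n k\<bar> + t (Suc n) * (if k = 0 then 0 else \<bar>wt t n (k - 1)\<bar>)" .
  qed
  also have "\<dots> = (1 - t (Suc n)) * (\<Sum>k\<le>Suc n. \<bar>wt t n k\<bar>) + t (Suc n) * (\<Sum>k\<le>Suc n. (if k = 0 then 0 else \<bar>wt t n (k - 1)\<bar>))"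
    by (simp only: sum.distrib sum_distrib_left)
  also have "(\<Sum>k\<le>Suc n. \<bar>wt t n k\<bar>) = (\<Sum>k\<le>n. \<bar>wt t n k\<bar>)" using wt_zero[of n "Suc n" t] by simp
  also have "(\<Sum>k\<le>Suc n. (if k = 0 then 0 else \<bar>wt t n (k - 1)\<bar>)) = (\<Sum>k\<le>n. \<bar>wt t n k\<bar>)"
    using shift_sum[where n=n and f="\<lambda>k. \<bar>wt t n k\<bar>"] by simp
  finally show ?thesis by (simp add: algebra_simps)
qed

lemma wt_bound:
  assumes "\<And>m. m > N \<Longrightarrow> 0 \<le> t m \<and> t m \<le> 1"
  shows "(\<Sum>k\<le>n. \<bar>wt t n k\<bar>) \<le> Max ((\<lambda>m. \<Sum>k\<le>m. \<bar>wt t m k\<bar>) ` {..N})"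
proof (induction n)
  case 0 then show ?case by (intro Max_ge finite_imageI) (auto intro: rev_image_eqI)
next
  case (Suc n)
  show ?case
  proof (cases "Suc n \<le> N")
    case True then show ?thesis by (intro Max_ge finite_imageI) (auto intro: rev_image_eqI)
  next
    case False
    then have "(\<Sum>k\<le>Suc n. \<bar>wt t (Suc n) k\<bar>) \<le> (\<Sum>k\<le>n. \<bar>wt t n k\<bar>)"
      using assms[of "Suc n"] by (intro wt_abs_step) auto
    then show ?thesis using Suc by linarith
  qed
qed

lemma wt_lim:
  assumes th: "\<theta> > 0"
    and tN: "\<And>n. n \<ge> N \<Longrightarrow> t (Suc n) = \<theta> / real (Suc n)"
    and sle: "\<And>n. n \<ge> N \<Longrightarrow> \<theta> / real (Suc n) \<le> 1"
  shows "(\<lambda>n. wt t n k) \<longlonglongrightarrow> 0"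
proof (induction k)
  case 0
  have "(\<lambda>n. \<bar>wt t n 0\<bar>) \<longlonglongrightarrow> 0"
  proof (rule recur_zero[OF th _ sle, where y="\<lambda>_. 0"])
    fix n assume "n \<ge> N"
    have "\<bar>wt t (Suc n) 0\<bar> = \<bar>(1 - \<theta> / real (Suc n)) * wt t n 0\<bar>" using tN[OF \<open>n \<ge> N\<close>] by simp
    also have "\<dots> = (1 - \<theta> / real (Suc n)) * \<bar>wt t n 0\<bar>" using sle[OF \<open>n \<ge> N\<close>] by (simp add: abs_mult)
    finally show "\<bar>wt t (Suc n) 0\<bar> \<le> (1 - \<theta> / real (Suc n)) * \<bar>wt t n 0\<bar> + \<theta> / real (Suc n) * 0" by simp
  qed auto
  then show ?case by (simp add: tendsto_rabs_zero_iff)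
next
  case (Suc k)
  have "(\<lambda>n. \<bar>wt t n (Suc k)\<bar>) \<longlonglongrightarrow> 0"
  proof (rule recur_zero[OF th _ sle, where y="\<lambda>n. \<bar>wt t n k\<bar>"])
    fix n assume "n \<ge> N"
    have s0: "0 \<le> \<theta> / real (Suc n)" using th by simp
    have "\<bar>wt t (Suc n) (Suc k)\<bar> = \<bar>(1 - \<theta> / real (Suc n)) * wt t n (Suc k) + \<theta> / real (Suc n) * wt t n k\<bar>"
      using tN[OF \<open>n \<ge> N\<close>] by simp
    also have "\<dots> \<le> \<bar>(1 - \<theta> / real (Suc n)) * wt t n (Suc k)\<bar> + \<bar>\<theta> / real (Suc n) * wt t n k\<bar>"
      by (rule abs_triangle_ineq)
    also have "\<dots> = (1 - \<theta> / real (Suc n)) * \<bar>wt t n (Suc k)\<bar> + \<theta> / real (Suc n) * \<bar>wt t n k\<bar>"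
      using sle[OF \<open>n \<ge> N\<close>] s0 th by (simp add: abs_mult)
    finally show "\<bar>wt t (Suc n) (Suc k)\<bar> \<le> (1 - \<theta> / real (Suc n)) * \<bar>wt t n (Suc k)\<bar> + \<theta> / real (Suc n) * \<bar>wt t n k\<bar>" .
  next
    show "(\<lambda>n. \<bar>wt t n k\<bar>) \<longlonglongrightarrow> 0" using Suc tendsto_rabs_zero by blast
  qed auto
  then show ?case by (simp add: tendsto_rabs_zero_iff)
qed




theorem mainTheorem14:
  fixes G :: "'a \<Rightarrow> 'a \<Rightarrow> real" and \<theta> :: real and M :: nat
    and \<pi> \<mu> :: "'a \<Rightarrow> real"
  defines "Q \<equiv> (\<lambda>i j. mat_id i j + G i j / \<theta>)"
  assumes gen: "generator_matrix G"
    and theta_pos: "\<theta> > 0"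
    and M_ge: "M \<ge> 1"
    and Q_nonneg: "entrywise_nonneg Q"
    and M_nonneg: "entrywise_nonneg (\<lambda>i j. mat_id i j + G i j / real M)"
    and pi_prob: "prob_vector \<pi>"
    and mu_prob: "prob_vector \<mu>"
    and mu_stat: "vecmat \<mu> Q = \<mu>"
    and conv: "\<forall>j. (\<lambda>n. ((\<lambda>v. vecmat v Q) ^^ n) \<pi> j) \<longlonglongrightarrow> \<mu> j"
  shows "(\<forall>j. (\<lambda>n. mu_seq G M \<pi> n j) \<longlonglongrightarrow> \<mu> j) \<and>
         (\<forall>j. (\<lambda>n. vecmat (mu_seq G M \<pi> n) Q j) \<longlonglongrightarrow> \<mu> j)"
proof -
  have Qst: "stoch Q"
    unfolding stoch_def
  proof (intro conjI allI)
    fix i j show "0 \<le> Q i j" using Q_nonneg by (simp add: entrywise_nonneg_def)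
  next
    fix i
    have sG: "(\<lambda>j. G i j) summable_on UNIV - {i}" and eG: "G i i = - (\<Sum>\<^sub>\<infinity>j\<in>UNIV - {i}. G i j)"
      using gen by (auto simp: generator_matrix_def)
    have "(\<lambda>j. inverse \<theta> * G i j) summable_on UNIV - {i}" by (rule summable_on_cmult_right[OF sG])
    moreover have "\<And>j. j \<in> UNIV - {i} \<Longrightarrow> inverse \<theta> * G i j = Q i j"
      by (auto simp: Q_def mat_id_def field_simps)
    ultimately have s1: "Q i summable_on UNIV - {i}" using summable_on_cong by (metis (no_types, lifting))
    have U: "UNIV = insert i (UNIV - {i})" by auto
    show "Q i summable_on UNIV" using s1 summable_on_insert_iff U by metis
    have "infsum (Q i) UNIV = Q i i + infsum (Q i) (UNIV - {i})"
      by (subst U) (rule infsum_insert[OF s1], simp)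
    also have "infsum (Q i) (UNIV - {i}) = (\<Sum>\<^sub>\<infinity>j\<in>UNIV - {i}. inverse \<theta> * G i j)"
      by (rule infsum_cong) (auto simp: Q_def mat_id_def field_simps)
    also have "\<dots> = inverse \<theta> * (\<Sum>\<^sub>\<infinity>j\<in>UNIV - {i}. G i j)" by (rule infsum_cmult_right')
    finally show "infsum (Q i) UNIV = 1" using eG theta_pos by (simp add: Q_def mat_id_def field_simps)
  qed
  have Qb: "\<And>i j. \<bar>Q i j\<bar> \<le> 1" using Qst stoch_le1[OF Qst] by (simp add: stoch_def)
  define P where "P k = ((\<lambda>v. vecmat v Q) ^^ k) \<pi>" for k
  have Pp: "prob_vector (P k)" for k
    by (induction k) (simp_all add: P_def pi_prob stoch_prob[OF Qst])
  have PS: "P (Suc k) = vecmat (P k) Q" for k by (simp add: P_def)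
  define t where "t m = (if m > M then \<theta> / real m else 0)" for m
  define N where "N = max M (nat \<lceil>\<theta>\<rceil>)"
  have tN: "t (Suc n) = \<theta> / real (Suc n)" if "n \<ge> N" for n
    using that by (simp add: t_def N_def)
  have sle: "\<theta> / real (Suc n) \<le> 1" if "n \<ge> N" for n
  proof -
    have "\<theta> \<le> real N" unfolding N_def by linarith
    then have "\<theta> \<le> real (Suc n)" using that by linarith
    then show ?thesis by simp
  qed
  have t01: "0 \<le> t m \<and> t m \<le> 1" if "m > N" for m
  proof -
    define n where "n = m - 1"
    have n: "m = Suc n" "n \<ge> N" using that by (auto simp: n_def)
    show ?thesis using tN[OF n(2)] sle[OF n(2)] theta_pos n(1) by simp
  qed
  have Kc: "Kmat G M m = (\<lambda>i j. (1 - t m) * mat_id i j + t m * Q i j)" for m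
  proof (intro ext)
    fix i j
    show "Kmat G M m i j = (1 - t m) * mat_id i j + t m * Q i j"
    proof (cases "m > M")
      case True
      then have "real m > 0" using M_ge by simp
      then show ?thesis using True theta_pos by (simp add: Kmat_def t_def Q_def field_simps)
    qed (simp add: Kmat_def t_def)
  qed
  have Kb: "\<bar>Kmat G M m i j\<bar> \<le> \<bar>1 - t m\<bar> + \<bar>t m\<bar>" for m i j
  proof -
    have "\<bar>Kmat G M m i j\<bar> \<le> \<bar>(1 - t m) * mat_id i j\<bar> + \<bar>t m * Q i j\<bar>" unfolding Kc by (rule abs_triangle_ineq)
    also have "\<bar>(1 - t m) * mat_id i j\<bar> \<le> \<bar>1 - t m\<bar>" by (simp add: abs_mult mat_id_def)
    also have "\<bar>t m * Q i j\<bar> \<le> \<bar>t m\<bar>" using Qb[of i j] by (simp add: abs_mult mult_left_le)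
    finally show ?thesis by simp
  qed
  have PK: "vecmat (P k) (Kmat G M m) j = (1 - t m) * P k j + t m * P (Suc k) j" for k m j
  proof -
    have "vecmat (P k) (Kmat G M m) j = (1 - t m) * vecmat (P k) mat_id j + t m * vecmat (P k) Q j"
      unfolding Kc
      by (rule vm_comb; rule vm_summ[OF Pp, where B=1]) (auto simp: mat_id_def Qb)
    then show ?thesis by (simp add: vm_id PS)
  qed
  have rep: "mu_seq G M \<pi> n = (\<lambda>j. \<Sum>k\<le>n. wt t n k * P k j)" for n
  proof (induction n)
    case 0 then show ?case by (simp add: P_def)
  next
    case (Suc n)
    show ?case
    proof (rule ext)
      fix j
      have "mu_seq G M \<pi> (Suc n) j = vecmat (\<lambda>i. \<Sum>k\<le>n. wt t n k * P k i) (Kmat G M (Suc n)) j"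
        using Suc by simp
      also have "\<dots> = (\<Sum>k\<le>n. wt t n k * vecmat (P k) (Kmat G M (Suc n)) j)"
        by (rule vm_lin[OF _ Pp Kb]) simp
      also have "\<dots> = (1 - t (Suc n)) * (\<Sum>k\<le>n. wt t n k * P k j) + t (Suc n) * (\<Sum>k\<le>n. wt t n k * P (Suc k) j)"
      proof -
        have "(\<Sum>k\<le>n. wt t n k * vecmat (P k) (Kmat G M (Suc n)) j) = (\<Sum>k\<le>n. (1 - t (Suc n)) * (wt t n k * P k j) + t (Suc n) * (wt t n k * P (Suc k) j))"
          by (rule sum.cong) (simp_all add: PK algebra_simps)
        then show ?thesis by (simp only: sum.distrib sum_distrib_left)
      qed
      also have "(\<Sum>k\<le>n. wt t n k * P k j) = (\<Sum>k\<le>Suc n. wt t n k * P k j)"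
        using wt_zero[of n "Suc n" t] by simp
      also have "(\<Sum>k\<le>n. wt t n k * P (Suc k) j) = (\<Sum>k\<le>Suc n. (if k = 0 then 0 else wt t n (k - 1) * P k j))"
        using shift_sum[where n=n and f="\<lambda>k. wt t n k * P (Suc k) j"]
        by (simp add: if_distrib cong: if_cong)
      also have "(1 - t (Suc n)) * (\<Sum>k\<le>Suc n. wt t n k * P k j) + t (Suc n) * (\<Sum>k\<le>Suc n. (if k = 0 then 0 else wt t n (k - 1) * P k j))
          = (\<Sum>k\<le>Suc n. wt t (Suc n) k * P k j)"
        by (simp only: wt.simps sum_distrib_left sum.distrib[symmetric]) (rule sum.cong, auto simp: algebra_simps)
      finally show "mu_seq G M \<pi> (Suc n) j = (\<Sum>k\<le>Suc n. wt t (Suc n) k * P k j)" .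
    qed
  qed
  define B where "B = Max ((\<lambda>m. \<Sum>k\<le>m. \<bar>wt t m k\<bar>) ` {..N})"
  have sb: "\<And>n. (\<Sum>k\<le>n. \<bar>wt t n k\<bar>) \<le> B" unfolding B_def by (rule wt_bound) (use t01 in blast)
  have wk: "\<And>k. (\<lambda>n. wt t n k) \<longlonglongrightarrow> 0" by (rule wt_lim[OF theta_pos tN sle])
  have ab: "\<bar>P k j - \<mu> j\<bar> \<le> 1" for k j
  proof -
    have "0 \<le> P k j" "0 \<le> \<mu> j" using Pp[of k] mu_prob by (auto simp: prob_vector_def)
    then show ?thesis using prob_le1[OF Pp, of k j] prob_le1[OF mu_prob, of j] by (simp add: abs_le_iff)
  qed
  have Plim: "(\<lambda>k. P k j) \<longlonglongrightarrow> \<mu> j" for j using conv by (simp add: P_def)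
  show ?thesis
  proof (intro conjI allI)
    fix j
    show "(\<lambda>n. mu_seq G M \<pi> n j) \<longlonglongrightarrow> \<mu> j"
      unfolding rep by (rule weighted_lim[OF wt_sum sb wk Plim ab])
  next
    fix j
    have "vecmat (mu_seq G M \<pi> n) Q j = (\<Sum>k\<le>n. wt t n k * P (Suc k) j)" for n
      unfolding rep by (subst vm_lin[OF _ Pp Qb]) (simp_all add: PS)
    moreover have "(\<lambda>n. \<Sum>k\<le>n. wt t n k * P (Suc k) j) \<longlonglongrightarrow> \<mu> j"
      by (rule weighted_lim[OF wt_sum sb wk LIMSEQ_Suc[OF Plim] ab])
    ultimately show "(\<lambda>n. vecmat (mu_seq G M \<pi> n) Q j) \<longlonglongrightarrow> \<mu> j" by simp
  qed
qed


end
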